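(* Let $d\ge1$, $D>0$, $\sigma\ge0$, $\alpha\in[0,1)$, $\rho>0$, and let $T$ be an even positive integer. Let $w^*\in\mathbb{R}^d$ with $\|w^*\|\le D$, and let $(x,\epsilon,b)$ be mutually independent random variables with $x\in\mathbb{R}^d$, $\|x\|\le1$ a.s., $\Sigma:=\mathbb{E}[(x-\mathbb{E}x)(x-\mathbb{E}x)^T]\succeq\rho I$, $\epsilon\in\mathbb{R}$, $|\epsilon|\le\sigma$ a.s., $\mathbb{E}\epsilon=0$, $b\in\mathbb{R}$, $\mathbb{P}(b\ne0)=\alpha$; set $y=\langle w^*,x\rangle+\epsilon+b$. Let $R=6D+\sigma$, $\lambda=(1-\alpha)\rho$, and let $\bar w$ be the output of the following algorithm, which uses $2T$ i.i.d. samples distributed as $(x,y)$: Phase 1: draw $T$ samples $(z_i,y_i)_{i=1}^T$ and set $\mu=\frac1T\sum_{i=1}^Tz_i$. Phase 2: set $w_1=0$; for $t=1,\dots,T$ draw a fresh sample $(x_t,y_t)$, set $\eta_t=\frac1{\lambda t}$, $g_t=\phi_R(\langle w_t,x_t-\mu\rangle-y_t)(x_t-\mu)$, $w_{t+1}=\Pi_{\mathcal W}(w_t-\eta_tg_t)$; output $\bar w=\frac2T\sum_{t=T/2+1}^Tw_t$. Then $$\mathbb{E}\|\bar w-w^*\|^2\le\frac{72R^2(2\log T+1)}{((1-\alpha)\rho)^2\,T}.$$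
   Context: $\mathcal W=\{w\in\mathbb{R}^d:\|w\|\le D\}$, $\Pi_{\mathcal W}$ is the Euclidean projection onto $\mathcal W$, and $\phi_R(s)=\min\{R,\max\{s,-R\}\}$ (the derivative of the Huber loss $h_R(s)=\frac12s^2$ for $|s|\le R$, $R(|s|-\frac12R)$ otherwise). The expectation is over all $2T$ samples. *)

theory Defs
  imports "HOL-Probability.Probability"
begin

text \<open>Clipped derivative of the Huber loss.\<close>
definition phi :: "real \<Rightarrow> real \<Rightarrow> real" where
  "phi R s = min R (max s (- R))"

text \<open>Euclidean projection onto W = closed ball of radius D.\<close>
definition projW :: "real \<Rightarrow> 'a::euclidean_space \<Rightarrow> 'a" where
  "projW D w = closest_point (cball 0 D) w"

text \<open>Phase 1: empirical mean of the first T covariates (samples indexed 0..T-1).\<close>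
definition phase1_mean :: "nat \<Rightarrow> (nat \<Rightarrow> 'a::euclidean_space \<times> real) \<Rightarrow> 'a" where
  "phase1_mean T s = (1 / real T) *\<^sub>R (\<Sum>i<T. fst (s i))"

text \<open>Phase 2 iterates: sgd_iter ... k = w_{k+1}; step t = k+1 uses the fresh sample s (T + k).\<close>
primrec sgd_iter :: "real \<Rightarrow> real \<Rightarrow> real \<Rightarrow> nat \<Rightarrow> (nat \<Rightarrow> 'a::euclidean_space \<times> real) \<Rightarrow> nat \<Rightarrow> 'a" where
  "sgd_iter D R lam T s 0 = 0"
| "sgd_iter D R lam T s (Suc k) =
     (let w = sgd_iter D R lam T s k;
          mu = phase1_mean T s;
          x = fst (s (T + k)); y = snd (s (T + k));
          eta = 1 / (lam * real (Suc k));
          g = phi R (inner w (x - mu) - y) *\<^sub>R (x - mu)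
      in projW D (w - eta *\<^sub>R g))"

text \<open>Output: w-bar = (2/T) * sum_{t = T/2+1}^{T} w_t, where w_t = sgd_iter ... (t - 1).\<close>
definition wbar :: "real \<Rightarrow> real \<Rightarrow> real \<Rightarrow> nat \<Rightarrow> (nat \<Rightarrow> 'a::euclidean_space \<times> real) \<Rightarrow> 'a" where
  "wbar D R lam T s = (2 / real T) *\<^sub>R (\<Sum>t\<in>{T div 2 + 1..T}. sgd_iter D R lam T s (t - 1))"

text \<open>Covariance (as a bilinear form) of a random vector with law Mx:
  cov_form Mx v u = E[<v, x - Ex> <u, x - Ex>] = v^T Sigma u.\<close>
definition cov_form :: "'a::euclidean_space measure \<Rightarrow> 'a \<Rightarrow> 'a \<Rightarrow> real" where
  "cov_form Mx v u =
     (let m = (\<integral>x. x \<partial>Mx) in \<integral>x. inner v (x - m) * inner u (x - m) \<partial>Mx)"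

definition sample_law :: "'a::euclidean_space \<Rightarrow> 'a measure \<Rightarrow> real measure \<Rightarrow> real measure \<Rightarrow> ('a \<times> real) measure" where
  "sample_law wstar Mx Me Mb =
     distr (Mx \<Otimes>\<^sub>M (Me \<Otimes>\<^sub>M Mb)) borel (\<lambda>(x, e, b). (x, inner wstar x + e + b))"

end

theory Submission
  imports Defs
begin


locale tctx =
  fixes D \<sigma> \<alpha> \<rho> :: real
    and wstar :: "'a::euclidean_space"
    and Mx :: "'a measure" and Me Mb :: "real measure"
  assumes D_pos: "D > 0" and sigma_nonneg: "\<sigma> \<ge> 0"
    and alpha: "0 \<le> \<alpha>" "\<alpha> < 1" and rho_pos: "\<rho> > 0"
    and wstar: "norm wstar \<le> D"
    and Mx: "prob_space Mx" "sets Mx = sets borel"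
    and Me: "prob_space Me" "sets Me = sets borel"
    and Mb: "prob_space Mb" "sets Mb = sets borel"
    and x_bdd: "AE x in Mx. norm x \<le> 1"
    and cov: "\<forall>v. cov_form Mx v v \<ge> \<rho> * (v \<bullet> v)"
    and eps_bdd: "AE e in Me. \<bar>e\<bar> \<le> \<sigma>"
    and eps_mean: "(\<integral>e. e \<partial>Me) = 0"
    and b_prob: "measure Mb {b. b \<noteq> 0} = \<alpha>"
begin

definition "N = Mx \<Otimes>\<^sub>M (Me \<Otimes>\<^sub>M Mb)"
definition "SL = sample_law wstar Mx Me Mb"
definition "m = (\<integral>x. x \<partial>Mx)"
definition "Q = Me \<Otimes>\<^sub>M Mb"

lemma probQ: "prob_space Q"
  unfolding Q_def using Me Mb by (intro prob_space_pair) auto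
lemma probN: "prob_space N"
  unfolding N_def using prob_space_pair[OF Mx(1) probQ[unfolded Q_def]] .

lemma setsN: "sets N = sets (borel :: ('a \<times> real \<times> real) measure)"
proof -
  have "sets N = sets (borel \<Otimes>\<^sub>M (borel \<Otimes>\<^sub>M borel) :: ('a \<times> real \<times> real) measure)"
    unfolding N_def by (intro sets_pair_measure_cong Mx Me Mb)
  also have "\<dots> = sets borel" unfolding borel_prod ..
  finally show ?thesis .
qed

definition "smp = (\<lambda>(x::'a, e::real, b::real). (x, inner wstar x + e + b))"

lemma smp_meas: "smp \<in> measurable N borel"
proof -
  have "continuous_on UNIV smp" unfolding smp_def case_prod_unfold
    by (intro continuous_intros)
  then have "smp \<in> borel_measurable borel" by (rule borel_measurable_continuous_onI)
  then show ?thesis by (simp add: measurable_cong_sets[OF setsN refl])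
qed

lemma SL_eq: "SL = distr N borel smp"
  unfolding SL_def sample_law_def N_def smp_def ..

lemma probSL: "prob_space SL"
  unfolding SL_eq using probN smp_meas by (rule prob_space.prob_space_distr)

lemma setsSL: "sets SL = sets borel" unfolding SL_eq by simp

declare Mx(2)[measurable_cong] Me(2)[measurable_cong] Mb(2)[measurable_cong]

lemma spaceMx: "space Mx = UNIV" using sets_eq_imp_space_eq[OF Mx(2)] by simp
lemma spaceMe: "space Me = UNIV" using sets_eq_imp_space_eq[OF Me(2)] by simp
lemma spaceMb: "space Mb = UNIV" using sets_eq_imp_space_eq[OF Mb(2)] by simp

lemma pairQ: "pair_sigma_finite Me Mb"
  using Me Mb by (simp add: pair_sigma_finite.intro prob_space_imp_sigma_finite)
lemma pairN: "pair_sigma_finite Mx Q"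
  using Mx probQ by (simp add: pair_sigma_finite.intro prob_space_imp_sigma_finite)

lemma test_meas: "(\<lambda>z. indicator {0} (snd (snd z)) * (v \<bullet> (fst z - mu))^2 :: real) \<in> borel_measurable N"
  unfolding N_def by measurable

lemma AE_N_x: "AE z in N. norm (fst z) \<le> 1"
proof -
  have eq: "distr N Mx fst = Mx" unfolding N_def by (rule prob_space.distr_pair_fst[OF probQ[unfolded Q_def]])
  have "AE x in distr N Mx fst. norm x \<le> 1" by (subst eq) (rule x_bdd)
  from AE_distrD[OF _ this] show ?thesis unfolding N_def by simp
qed

lemma AE_Q_e: "AE z in Q. \<bar>fst z\<bar> \<le> \<sigma>"
proof -
  have eq: "distr Q Me fst = Me" unfolding Q_def by (rule prob_space.distr_pair_fst[OF Mb(1)])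
  have "AE x in distr Q Me fst. \<bar>x\<bar> \<le> \<sigma>" by (subst eq) (rule eps_bdd)
  from AE_distrD[OF _ this] show ?thesis unfolding Q_def by simp
qed

lemma AE_N_e: "AE z in N. \<bar>fst (snd z)\<bar> \<le> \<sigma>"
  unfolding N_def Q_def[symmetric]
proof (rule pair_sigma_finite.AE_pair_measure[OF pairN])
  show "{x \<in> space (Mx \<Otimes>\<^sub>M Q). \<bar>fst (snd x)\<bar> \<le> \<sigma>} \<in> sets (Mx \<Otimes>\<^sub>M Q)"
    unfolding Q_def by measurable
  show "AE x in Mx. AE y in Q. \<bar>fst (snd (x, y))\<bar> \<le> \<sigma>" using AE_Q_e by simp
qed

lemma int_prod_N:
  fixes A :: "'a \<Rightarrow> real" and B :: "real \<times> real \<Rightarrow> real"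
  assumes "integrable N (\<lambda>z. A (fst z) * B (snd z))"
  shows "(\<integral>z. A (fst z) * B (snd z) \<partial>N) = (\<integral>x. A x \<partial>Mx) * (\<integral>y. B y \<partial>Q)"
proof -
  have "(\<integral>z. A (fst z) * B (snd z) \<partial>N) = (\<integral>x. (\<integral>y. A x * B y \<partial>Q) \<partial>Mx)"
    using pair_sigma_finite.integral_fst'[OF pairN, of "\<lambda>z. A (fst z) * B (snd z)"] assms
    unfolding N_def Q_def by simp
  also have "\<dots> = (\<integral>x. A x * (\<integral>y. B y \<partial>Q) \<partial>Mx)" by simp
  also have "\<dots> = (\<integral>x. A x \<partial>Mx) * (\<integral>y. B y \<partial>Q)" by simp
  finally show ?thesis .
qed

lemma int_prod_Q:
  fixes A :: "real \<Rightarrow> real" and B :: "real \<Rightarrow> real"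
  assumes "integrable Q (\<lambda>z. A (fst z) * B (snd z))"
  shows "(\<integral>z. A (fst z) * B (snd z) \<partial>Q) = (\<integral>x. A x \<partial>Me) * (\<integral>y. B y \<partial>Mb)"
proof -
  have "(\<integral>z. A (fst z) * B (snd z) \<partial>Q) = (\<integral>x. (\<integral>y. A x * B y \<partial>Mb) \<partial>Me)"
    using pair_sigma_finite.integral_fst'[OF pairQ, of "\<lambda>z. A (fst z) * B (snd z)"] assms
    unfolding Q_def by simp
  also have "\<dots> = (\<integral>x. A x * (\<integral>y. B y \<partial>Mb) \<partial>Me)" by simp
  also have "\<dots> = (\<integral>x. A x \<partial>Me) * (\<integral>y. B y \<partial>Mb)" by simp
  finally show ?thesis .
qed


abbreviation "R \<equiv> 6 * D + \<sigma>"
abbreviation "lam \<equiv> (1 - \<alpha>) * \<rho>"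

definition gN :: "'a \<Rightarrow> 'a \<Rightarrow> 'a \<times> real \<times> real \<Rightarrow> 'a" where
  "gN w mu z = phi R (inner w (fst z - mu) - (inner wstar (fst z) + fst (snd z) + snd (snd z))) *\<^sub>R (fst z - mu)"

lemma gN_meas[measurable]: "gN w mu \<in> borel_measurable N"
  unfolding gN_def phi_def N_def by measurable

lemma R_pos: "R > 0" using D_pos sigma_nonneg by simp

lemma gN_bound:
  assumes "norm (fst z) \<le> 1" "norm mu \<le> 1"
  shows "norm (gN w mu z) \<le> 2 * R"
proof -
  have "norm (fst z - mu) \<le> 2" using assms norm_triangle_ineq4[of "fst z" mu] by linarith
  moreover have "\<bar>phi R s\<bar> \<le> R" for s using R_pos unfolding phi_def by auto
  ultimately have "\<bar>phi R (inner w (fst z - mu) - (inner wstar (fst z) + fst (snd z) + snd (snd z)))\<bar> * norm (fst z - mu) \<le> R * 2"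
    by (intro mult_mono) (auto simp: R_pos less_imp_le)
  then show ?thesis unfolding gN_def by (simp add: mult.commute)
qed

lemma inner_bd:
  assumes "norm x \<le> 1" "norm mu \<le> 1" "norm v \<le> c"
  shows "\<bar>inner v (x - mu)\<bar> \<le> 2 * c"
proof -
  have "norm (x - mu) \<le> 2" using assms norm_triangle_ineq4[of x mu] by linarith
  have "\<bar>inner v (x - mu)\<bar> \<le> norm v * norm (x - mu)" by (rule Cauchy_Schwarz_ineq2)
  also have "\<dots> \<le> c * 2" using \<open>norm (x - mu) \<le> 2\<close> assms(3) by (simp add: mult_mono')
  finally show ?thesis by simp
qed

lemma phi_id: "\<bar>s\<bar> \<le> r \<Longrightarrow> phi r s = s" unfolding phi_def by auto
lemma phi_mono: "a \<le> b \<Longrightarrow> phi r a \<le> phi r b" unfolding phi_def by auto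

lemma gN_inner:
  assumes x: "norm (fst z) \<le> 1" and e: "\<bar>fst (snd z)\<bar> \<le> \<sigma>" and mu: "norm mu \<le> 1" and w: "norm w \<le> D"
  shows "inner (gN w mu z) (w - wstar) \<ge>
     (inner (w - wstar) (fst z - mu))^2 * indicator {0} (snd (snd z))
   + inner (w - wstar) (fst z - mu) * phi R (- inner wstar mu - fst (snd z) - snd (snd z))"
proof -
  obtain x e b where z: "z = (x, e, b)" by (cases z) auto
  define l where "l = inner (w - wstar) (x - mu)"
  define a where "a = inner w (x - mu) - (inner wstar x + e + b)"
  define b0 where "b0 = - inner wstar mu - e - b"
  have ab: "a - b0 = l" unfolding a_def b0_def l_def by (simp add: inner_diff_left inner_diff_right)
  have lhs: "inner (gN w mu z) (w - wstar) = phi R a * l"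
    unfolding gN_def z a_def l_def by (simp add: inner_commute)
  have mono: "(phi R a - phi R b0) * l \<ge> 0"
  proof (cases "a \<le> b0")
    case True then show ?thesis using phi_mono[OF True, of R] ab by (simp add: mult_nonpos_nonpos)
  next
    case False then show ?thesis using phi_mono[of b0 a R] ab by simp
  qed
  have rhs: "(inner (w - wstar) (fst z - mu))^2 * indicator {0} (snd (snd z))
   + inner (w - wstar) (fst z - mu) * phi R (- inner wstar mu - fst (snd z) - snd (snd z))
   = l^2 * indicator {0} b + l * phi R b0" unfolding z l_def b0_def by simp
  show ?thesis unfolding rhs lhs
  proof (cases "b = 0")
    case True
    have xe: "norm x \<le> 1" "\<bar>e\<bar> \<le> \<sigma>" using x e z by auto
    have "\<bar>inner w (x - mu)\<bar> \<le> 2 * D" using inner_bd[OF xe(1) mu w] .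
    moreover have "\<bar>inner wstar x\<bar> \<le> D"
      using Cauchy_Schwarz_ineq2[of wstar x] wstar xe(1) by (smt (verit) mult_left_le norm_ge_zero)
    moreover have "\<bar>inner wstar mu\<bar> \<le> D"
      using Cauchy_Schwarz_ineq2[of wstar mu] wstar mu by (smt (verit) mult_left_le norm_ge_zero)
    ultimately have "\<bar>a\<bar> \<le> R" "\<bar>b0\<bar> \<le> R" unfolding a_def b0_def using True xe D_pos by auto
    then have "phi R a = a" "phi R b0 = b0" by (auto intro: phi_id)
    then show "l\<^sup>2 * indicator {0} b + l * phi R b0 \<le> phi R a * l" using ab True
      by (simp add: power2_eq_square algebra_simps)
  next
    case False
    then show "l\<^sup>2 * indicator {0} b + l * phi R b0 \<le> phi R a * l" using mono
      by (simp add: algebra_simps)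
  qed
qed


lemma intMx:
  fixes f :: "'a \<Rightarrow> 'b::{banach,second_countable_topology}"
  assumes "f \<in> borel_measurable borel" "\<And>x. norm x \<le> 1 \<Longrightarrow> norm (f x) \<le> B"
  shows "integrable Mx f"
proof -
  interpret prob_space Mx by (rule Mx(1))
  show ?thesis
  proof (rule integrable_const_bound)
    show "AE x in Mx. norm (f x) \<le> B" using x_bdd by eventually_elim (rule assms(2))
    show "f \<in> borel_measurable Mx" using assms(1) by (simp add: measurable_cong_sets[OF Mx(2) refl])
  qed
qed

lemma intN:
  fixes f :: "'a \<times> real \<times> real \<Rightarrow> 'b::{banach,second_countable_topology}"
  assumes "f \<in> borel_measurable N" "\<And>z. norm (fst z) \<le> 1 \<Longrightarrow> norm (f z) \<le> B"
  shows "integrable N f"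
proof -
  interpret prob_space N by (rule probN)
  show ?thesis
  proof (rule integrable_const_bound)
    show "AE x in N. norm (f x) \<le> B" using AE_N_x by eventually_elim (rule assms(2))
  qed (rule assms(1))
qed

lemma int_x: "integrable Mx (\<lambda>x. x)"
  by (rule intMx[of _ 1]) auto

lemma m_norm: "norm m \<le> 1"
proof -
  interpret prob_space Mx by (rule Mx(1))
  have "norm m \<le> (\<integral>x. norm x \<partial>Mx)" unfolding m_def by (rule integral_norm_bound)
  also have "\<dots> \<le> 1" by (rule integral_le_const) (use x_bdd int_x in auto)
  finally show ?thesis .
qed

lemma int_lin: "(\<integral>x. inner v (x - mu) \<partial>Mx) = inner v (m - mu)"
proof -
  interpret prob_space Mx by (rule Mx(1))
  have "(\<integral>x. inner v (x - mu) \<partial>Mx) = (\<integral>x. inner v x - inner v mu \<partial>Mx)"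
    by (simp add: inner_diff_right)
  also have "\<dots> = (\<integral>x. inner v x \<partial>Mx) - (\<integral>x. inner v mu \<partial>Mx)"
  proof (rule Bochner_Integration.integral_diff)
    show "integrable Mx (\<lambda>x. inner v x)" using int_x by auto
  qed simp
  also have "(\<integral>x. inner v mu \<partial>Mx) = inner v mu" by (simp add: prob_space)
  also have "(\<integral>x. inner v x \<partial>Mx) = inner v m" unfolding m_def using int_x by simp
  finally show ?thesis by (simp add: inner_diff_right)
qed

lemma int_sq: "(\<integral>x. (inner v (x - mu))^2 \<partial>Mx) \<ge> \<rho> * (norm v)^2"
proof -
  interpret prob_space Mx by (rule Mx(1))
  define c where "c = inner v (m - mu)"
  have ib: "norm x \<le> 1 \<Longrightarrow> \<bar>inner v (x - m)\<bar> \<le> 2 * norm v" for x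
    by (rule inner_bd[OF _ m_norm]) auto
  have i1: "integrable Mx (\<lambda>x. inner v (x - m) * inner v (x - m))"
  proof (rule intMx[of _ "(2 * norm v) * (2 * norm v)"])
    fix x :: 'a assume "norm x \<le> 1"
    from mult_mono[OF ib[OF this] ib[OF this] _ abs_ge_zero]
    show "norm (inner v (x - m) * inner v (x - m)) \<le> (2 * norm v) * (2 * norm v)"
      by (simp add: abs_mult)
  qed simp
  have i2: "integrable Mx (\<lambda>x. 2 * c * inner v (x - m))"
  proof (rule intMx[of _ "\<bar>2*c\<bar> * (2 * norm v)"])
    fix x :: 'a assume "norm x \<le> 1"
    have "norm (2 * c * inner v (x - m)) = \<bar>2*c\<bar> * \<bar>inner v (x - m)\<bar>" by (simp add: abs_mult)
    also have "\<dots> \<le> \<bar>2*c\<bar> * (2 * norm v)" by (rule mult_left_mono[OF ib[OF \<open>norm x \<le> 1\<close>]]) simp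
    finally show "norm (2 * c * inner v (x - m)) \<le> \<bar>2*c\<bar> * (2 * norm v)" .
  qed simp
  have eq: "(inner v (x - mu))^2 = inner v (x - m) * inner v (x - m) + 2 * c * inner v (x - m) + c^2" for x
    unfolding c_def by (simp add: inner_diff_right power2_eq_square algebra_simps)
  have "(\<integral>x. (inner v (x - mu))^2 \<partial>Mx) = (\<integral>x. inner v (x - m) * inner v (x - m) \<partial>Mx) + 2 * c * (\<integral>x. inner v (x - m) \<partial>Mx) + c^2"
    unfolding eq using i1 i2 by (simp add: integral_add prob_space)
  also have "(\<integral>x. inner v (x - m) \<partial>Mx) = 0" using int_lin[of v m] by simp
  also have "(\<integral>x. inner v (x - m) * inner v (x - m) \<partial>Mx) = cov_form Mx v v"
    unfolding cov_form_def m_def Let_def ..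
  finally have "(\<integral>x. (inner v (x - mu))^2 \<partial>Mx) \<ge> cov_form Mx v v" by simp
  moreover have "cov_form Mx v v \<ge> \<rho> * (norm v)^2" using cov by (simp add: power2_norm_eq_inner)
  ultimately show ?thesis by linarith
qed

lemma int_ind: "(\<integral>y. indicator {0} (snd y) \<partial>Q) = 1 - \<alpha>"
proof -
  interpret Mb: prob_space Mb by (rule Mb(1))
  interpret Me: prob_space Me by (rule Me(1))
  interpret Q: prob_space Q by (rule probQ)
  have "(\<integral>y. indicator {0} (snd y) \<partial>Q) = (\<integral>y. (\<lambda>_. 1::real) (fst y) * indicator {0} (snd y) \<partial>Q)" by simp
  also have "\<dots> = (\<integral>x. 1 \<partial>Me) * (\<integral>y. indicator {0} y \<partial>Mb)"
  proof (rule int_prod_Q)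
    show "integrable Q (\<lambda>z. 1 * indicat_real {0} (snd z))"
      by (rule Q.integrable_const_bound[of _ 1]) (auto simp: Q_def)
  qed
  also have "\<dots> = measure Mb {0}" by (simp add: Me.prob_space)
  also have "measure Mb {0} = 1 - \<alpha>"
  proof -
    have "{0} = space Mb - {b. b \<noteq> 0}" using spaceMb by auto
    then show ?thesis using b_prob Mb.prob_compl[of "{b. b \<noteq> 0}"] by simp
  qed
  finally show ?thesis .
qed

lemma int_phi: "\<bar>\<integral>y. phi R (c - fst y - snd y) \<partial>Q\<bar> \<le> R"
proof -
  interpret Q: prob_space Q by (rule probQ)
  have b: "\<bar>phi R s\<bar> \<le> R" for s using R_pos unfolding phi_def by auto
  have b1: "phi R s \<le> R" "phi R s \<ge> -R" for s using b[of s] by auto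
  have i: "integrable Q (\<lambda>y. phi R (c - fst y - snd y))"
    by (rule Q.integrable_const_bound[of _ R]) (use b in \<open>auto simp: Q_def phi_def\<close>)
  have "(\<integral>y. phi R (c - fst y - snd y) \<partial>Q) \<le> R" by (rule Q.integral_le_const) (use b1 i in \<open>auto\<close>)
  moreover have "(\<integral>y. phi R (c - fst y - snd y) \<partial>Q) \<ge> -R" by (rule Q.integral_ge_const) (use b1 i in \<open>auto\<close>)
  ultimately show ?thesis by auto
qed


lemma E2:
  assumes w: "norm w \<le> D" and mu: "norm mu \<le> 1"
  shows "(\<integral>z. inner (gN w mu z) (w - wstar) \<partial>N) \<ge> lam * (norm (w - wstar))^2 - R * norm (w - wstar) * norm (m - mu)"
proof -
  interpret N: prob_space N by (rule probN)
  define v where "v = w - wstar"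
  define F1 where "F1 = (\<lambda>z::'a \<times> real \<times> real. (inner v (fst z - mu))^2 * indicator {0} (snd (snd z)) :: real)"
  define F2 where "F2 = (\<lambda>z::'a \<times> real \<times> real. inner v (fst z - mu) * phi R (- inner wstar mu - fst (snd z) - snd (snd z)))"
  have ib: "norm x \<le> 1 \<Longrightarrow> \<bar>inner v (x - mu)\<bar> \<le> 2 * norm v" for x
    by (rule inner_bd[OF _ mu]) auto
  have pb: "\<bar>phi R s\<bar> \<le> R" for s using R_pos unfolding phi_def by auto
  have iF1: "integrable N F1"
  proof (rule intN[of _ "(2 * norm v) * (2 * norm v)"])
    show "F1 \<in> borel_measurable N" unfolding F1_def N_def by measurable
    fix z :: "'a \<times> real \<times> real" assume "norm (fst z) \<le> 1"
    from mult_mono[OF ib[OF this] ib[OF this] _ abs_ge_zero]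
    show "norm (F1 z) \<le> (2 * norm v) * (2 * norm v)" unfolding F1_def
      by (auto simp: abs_mult power2_eq_square indicator_def)
  qed
  have iF2: "integrable N F2"
  proof (rule intN[of _ "(2 * norm v) * R"])
    show "F2 \<in> borel_measurable N" unfolding F2_def N_def phi_def by measurable
    fix z :: "'a \<times> real \<times> real" assume "norm (fst z) \<le> 1"
    from mult_mono[OF ib[OF this] pb _ abs_ge_zero]
    show "norm (F2 z) \<le> (2 * norm v) * R" unfolding F2_def
      by (auto simp: abs_mult)
  qed
  have iG: "integrable N (\<lambda>z. inner (gN w mu z) v)"
  proof (rule intN[of _ "(2 * R) * norm v"])
    show "(\<lambda>z. inner (gN w mu z) v) \<in> borel_measurable N" by measurable
    fix z :: "'a \<times> real \<times> real" assume z: "norm (fst z) \<le> 1"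
    have "\<bar>inner (gN w mu z) v\<bar> \<le> norm (gN w mu z) * norm v" by (rule Cauchy_Schwarz_ineq2)
    also have "\<dots> \<le> (2 * R) * norm v" by (rule mult_right_mono[OF gN_bound[OF z mu]]) simp
    finally show "norm (inner (gN w mu z) v) \<le> (2 * R) * norm v" by simp
  qed
  have "AE z in N. inner (gN w mu z) v \<ge> F1 z + F2 z"
    using AE_N_x AE_N_e
  proof eventually_elim
    case (elim z)
    then show ?case using gN_inner[OF elim(1) elim(2) mu w] unfolding F1_def F2_def v_def by simp
  qed
  then have "(\<integral>z. inner (gN w mu z) v \<partial>N) \<ge> (\<integral>z. F1 z + F2 z \<partial>N)"
    using iF1 iF2 iG by (intro integral_mono_AE) auto
  also have "(\<integral>z. F1 z + F2 z \<partial>N) = (\<integral>z. F1 z \<partial>N) + (\<integral>z. F2 z \<partial>N)"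
    using iF1 iF2 by (rule Bochner_Integration.integral_add)
  also have "(\<integral>z. F1 z \<partial>N) = (\<integral>x. (inner v (x - mu))^2 \<partial>Mx) * (1 - \<alpha>)"
    using int_prod_N[of "\<lambda>x. (inner v (x - mu))^2" "\<lambda>y. indicator {0} (snd y)"] iF1 int_ind
    unfolding F1_def by simp
  also have "(\<integral>z. F2 z \<partial>N) = inner v (m - mu) * (\<integral>y. phi R (- inner wstar mu - fst y - snd y) \<partial>Q)"
    using int_prod_N[of "\<lambda>x. inner v (x - mu)" "\<lambda>y. phi R (- inner wstar mu - fst y - snd y)"] iF2 int_lin
    unfolding F2_def by simp
  finally have main: "(\<integral>z. inner (gN w mu z) v \<partial>N) \<ge> (\<integral>x. (inner v (x - mu))^2 \<partial>Mx) * (1 - \<alpha>)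
      + inner v (m - mu) * (\<integral>y. phi R (- inner wstar mu - fst y - snd y) \<partial>Q)" .
  have a1: "(\<integral>x. (inner v (x - mu))^2 \<partial>Mx) * (1 - \<alpha>) \<ge> \<rho> * (norm v)^2 * (1 - \<alpha>)"
    using int_sq[of v mu] alpha by (intro mult_right_mono) auto
  have "\<bar>inner v (m - mu) * (\<integral>y. phi R (- inner wstar mu - fst y - snd y) \<partial>Q)\<bar> \<le> (norm v * norm (m - mu)) * R"
    unfolding abs_mult by (intro mult_mono Cauchy_Schwarz_ineq2 int_phi) auto
  then show ?thesis using main a1 unfolding v_def by (simp add: algebra_simps abs_le_iff)
qed

lemma E1:
  assumes mu: "norm mu \<le> 1"
  shows "(\<integral>z. (norm (gN w mu z))^2 \<partial>N) \<le> 4 * R^2" and "integrable N (\<lambda>z. (norm (gN w mu z))^2)"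
proof -
  interpret N: prob_space N by (rule probN)
  have e: "(2 * R)^2 = 4 * R^2" unfolding power2_eq_square by (simp add: algebra_simps)
  have b: "norm (fst z) \<le> 1 \<Longrightarrow> (norm (gN w mu z))^2 \<le> 4 * R^2" for z
    using power_mono[OF gN_bound[OF _ mu], of z w 2] unfolding e by simp
  show i: "integrable N (\<lambda>z. (norm (gN w mu z))^2)"
    by (rule intN[of _ "4 * R^2"]) (use b in auto)
  show "(\<integral>z. (norm (gN w mu z))^2 \<partial>N) \<le> 4 * R^2"
    by (rule N.integral_le_const[OF i]) (use AE_N_x b in auto)
qed


lemma iG:
  assumes mu: "norm mu \<le> 1"
  shows "integrable N (\<lambda>z. inner (gN w mu z) v)"
proof (rule intN[of _ "(2 * R) * norm v"])
  show "(\<lambda>z. inner (gN w mu z) v) \<in> borel_measurable N" by measurable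
  fix z :: "'a \<times> real \<times> real" assume z: "norm (fst z) \<le> 1"
  have "\<bar>inner (gN w mu z) v\<bar> \<le> norm (gN w mu z) * norm v" by (rule Cauchy_Schwarz_ineq2)
  also have "\<dots> \<le> (2 * R) * norm v" by (rule mult_right_mono[OF gN_bound[OF z mu]]) simp
  finally show "norm (inner (gN w mu z) v) \<le> (2 * R) * norm v" by simp
qed

lemma norm_expand: "(norm (v - c *\<^sub>R g))^2 = (norm v)^2 - 2 * c * inner g v + c^2 * (norm g)^2"
  unfolding power2_norm_eq_inner
  by (simp add: inner_diff_left inner_diff_right inner_commute power2_eq_square algebra_simps)

lemma E3:
  assumes w: "norm w \<le> D" and mu: "norm mu \<le> 1" and eta: "eta \<ge> 0"
  shows "(\<integral>z. (norm (w - wstar - eta *\<^sub>R gN w mu z))^2 \<partial>N) \<le>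
     (norm (w - wstar))^2 - 2 * eta * (lam * (norm (w - wstar))^2 - R * norm (w - wstar) * norm (m - mu)) + eta^2 * (4 * R^2)"
    and "integrable N (\<lambda>z. (norm (w - wstar - eta *\<^sub>R gN w mu z))^2)"
proof -
  define v where "v = w - wstar"
  have i1: "integrable N (\<lambda>z. inner (gN w mu z) v)" by (rule iG[OF mu])
  have i2: "integrable N (\<lambda>z. (norm (gN w mu z))^2)" by (rule E1(2)[OF mu])
  have eq: "(\<lambda>z. (norm (v - eta *\<^sub>R gN w mu z))^2) =
     (\<lambda>z. (norm v)^2 - 2 * eta * inner (gN w mu z) v + eta^2 * (norm (gN w mu z))^2)"
    by (simp add: norm_expand)
  interpret N: prob_space N by (rule probN)
  have ii: "integrable N (\<lambda>z. (norm v)^2 - 2 * eta * inner (gN w mu z) v + eta^2 * (norm (gN w mu z))^2)"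
    using i1 i2 by auto
  then show "integrable N (\<lambda>z. (norm (w - wstar - eta *\<^sub>R gN w mu z))^2)" using eq unfolding v_def by simp
  have "(\<integral>z. (norm (v - eta *\<^sub>R gN w mu z))^2 \<partial>N) =
      (norm v)^2 - 2 * eta * (\<integral>z. inner (gN w mu z) v \<partial>N) + eta^2 * (\<integral>z. (norm (gN w mu z))^2 \<partial>N)"
    unfolding eq using i1 i2 by (simp add: N.prob_space)
  also have "\<dots> \<le> (norm v)^2 - 2 * eta * (lam * (norm v)^2 - R * norm v * norm (m - mu)) + eta^2 * (4 * R^2)"
  proof -
    have "2 * eta * (lam * (norm v)^2 - R * norm v * norm (m - mu)) \<le> 2 * eta * (\<integral>z. inner (gN w mu z) v \<partial>N)"
      using E2[OF w mu] eta unfolding v_def by (intro mult_left_mono) auto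
    moreover have "eta^2 * (\<integral>z. (norm (gN w mu z))^2 \<partial>N) \<le> eta^2 * (4 * R^2)"
      using E1(1)[OF mu] by (intro mult_left_mono) auto
    ultimately show ?thesis by linarith
  qed
  finally show "(\<integral>z. (norm (w - wstar - eta *\<^sub>R gN w mu z))^2 \<partial>N) \<le>
     (norm (w - wstar))^2 - 2 * eta * (lam * (norm (w - wstar))^2 - R * norm (w - wstar) * norm (m - mu)) + eta^2 * (4 * R^2)"
    unfolding v_def .
qed

lemma projW_meas[measurable]: "projW D \<in> borel_measurable borel"
  unfolding projW_def
  by (rule borel_measurable_continuous_onI, rule continuous_on_closest_point) (use D_pos in auto)

lemma projW_contr: "norm (projW D u - wstar) \<le> norm (u - wstar)"
proof -
  have "closest_point (cball 0 D) wstar = wstar" using wstar by (intro closest_point_self) auto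
  then show ?thesis
    using closest_point_lipschitz[of "cball (0::'a) D" u wstar] D_pos
    unfolding projW_def dist_norm by auto
qed

lemma projW_cont[continuous_intros]: "continuous_on S f \<Longrightarrow> continuous_on S (\<lambda>x. projW D (f x))"
  unfolding projW_def
  by (rule continuous_on_compose2[OF continuous_on_closest_point[of "cball 0 D" UNIV]]) (use D_pos in auto)

lemma phi_cont[continuous_intros]: "continuous_on S f \<Longrightarrow> continuous_on S (\<lambda>x. phi r (f x))"
  unfolding phi_def by (intro continuous_intros)

lemma step_SL:
  assumes w: "norm w \<le> D" and mu: "norm mu \<le> 1" and eta: "eta \<ge> 0"
  shows "(\<integral>\<^sup>+ y. ennreal ((norm (projW D (w - eta *\<^sub>R (phi R (inner w (fst y - mu) - snd y) *\<^sub>R (fst y - mu))) - wstar))^2) \<partial>SL)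
    \<le> ennreal ((norm (w - wstar))^2 - 2 * eta * (lam * (norm (w - wstar))^2 - R * norm (w - wstar) * norm (m - mu)) + eta^2 * (4 * R^2))"
proof -
  interpret N: prob_space N by (rule probN)
  let ?f = "\<lambda>y::'a \<times> real. ennreal ((norm (projW D (w - eta *\<^sub>R (phi R (inner w (fst y - mu) - snd y) *\<^sub>R (fst y - mu))) - wstar))^2)"
  have "(\<lambda>y::'a \<times> real. (norm (projW D (w - eta *\<^sub>R (phi R (inner w (fst y - mu) - snd y) *\<^sub>R (fst y - mu))) - wstar))^2) \<in> borel_measurable borel"
    by (intro borel_measurable_continuous_onI continuous_intros)
  then have fm: "?f \<in> borel_measurable borel" by measurable
  have "integral\<^sup>N SL ?f = (\<integral>\<^sup>+ z. ?f (smp z) \<partial>N)"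
    unfolding SL_eq by (rule nn_integral_distr[OF smp_meas]) (use fm in simp)
  also have "\<dots> \<le> (\<integral>\<^sup>+ z. ennreal ((norm (w - wstar - eta *\<^sub>R gN w mu z))^2) \<partial>N)"
  proof (rule nn_integral_mono)
    fix z :: "'a \<times> real \<times> real"
    have "?f (smp z) = ennreal ((norm (projW D (w - eta *\<^sub>R gN w mu z) - wstar))^2)"
      unfolding smp_def gN_def by (cases z) auto
    also have "\<dots> \<le> ennreal ((norm (w - wstar - eta *\<^sub>R gN w mu z))^2)"
      using projW_contr[of "w - eta *\<^sub>R gN w mu z"]
      by (intro ennreal_leI power_mono) (auto simp: algebra_simps)
    finally show "?f (smp z) \<le> ennreal ((norm (w - wstar - eta *\<^sub>R gN w mu z))^2)" .
  qed
  also have "\<dots> = ennreal (\<integral>z. (norm (w - wstar - eta *\<^sub>R gN w mu z))^2 \<partial>N)"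
    by (rule nn_integral_eq_integral[OF E3(2)[OF w mu eta]]) auto
  also have "\<dots> \<le> ennreal ((norm (w - wstar))^2 - 2 * eta * (lam * (norm (w - wstar))^2 - R * norm (w - wstar) * norm (m - mu)) + eta^2 * (4 * R^2))"
    by (rule ennreal_leI[OF E3(1)[OF w mu eta]])
  finally show ?thesis .
qed


lemma AE_SL_x: "AE y in SL. norm (fst y) \<le> 1"
proof -
  have c: "continuous_on UNIV (\<lambda>y::'a \<times> real. norm (fst y))" by (intro continuous_intros)
  have "closed {y::'a \<times> real. norm (fst y) \<le> (1::real)}"
    by (intro closed_Collect_le continuous_intros)
  then have "{y \<in> space borel. norm (fst y) \<le> (1::real)} \<in> sets (borel :: ('a \<times> real) measure)"
    by simp
  then show ?thesis unfolding SL_eq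
    using AE_N_x by (subst AE_distr_iff[OF smp_meas]) (auto simp: smp_def split: prod.splits)
qed

lemma SL_fst_meas[measurable]: "fst \<in> borel_measurable SL"
proof -
  have "fst \<in> borel_measurable (borel :: ('a \<times> real) measure)"
    by (rule borel_measurable_continuous_onI) (rule continuous_on_fst[OF continuous_on_id])
  then show ?thesis by (simp add: measurable_cong_sets[OF setsSL refl])
qed
lemma SL_snd_meas[measurable]: "snd \<in> borel_measurable SL"
proof -
  have "snd \<in> borel_measurable (borel :: ('a \<times> real) measure)"
    by (rule borel_measurable_continuous_onI) (rule continuous_on_snd[OF continuous_on_id])
  then show ?thesis by (simp add: measurable_cong_sets[OF setsSL refl])
qed

end

lemma phase1_local: "(\<And>j. j < T \<Longrightarrow> s j = s' j) \<Longrightarrow> phase1_mean T s = phase1_mean T s'"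
  unfolding phase1_mean_def by simp

lemma sgd_local: "(\<And>j. j < T + k \<Longrightarrow> s j = s' j) \<Longrightarrow> sgd_iter D R lam T s k = sgd_iter D R lam T s' k"
proof (induction k)
  case 0 then show ?case by simp
next
  case (Suc k)
  have "sgd_iter D R lam T s k = sgd_iter D R lam T s' k" using Suc by auto
  moreover have "phase1_mean T s = phase1_mean T s'" using Suc by (intro phase1_local) auto
  moreover have "s (T + k) = s' (T + k)" using Suc by auto
  ultimately show ?case by (simp add: Let_def)
qed

lemma sgd_norm: "D \<ge> 0 \<Longrightarrow> norm (sgd_iter D R lam T s k) \<le> D"
proof (cases k)
  case (Suc k')
  assume D: "D \<ge> 0"
  have "projW D u \<in> cball 0 D" for u :: 'a
    unfolding projW_def using D by (intro closest_point_in_set) auto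
  then show ?thesis using Suc by (simp add: Let_def)
qed simp

locale tctx2 = tctx +
  fixes T :: nat
  assumes T_pos: "T > 0" and T_even: "even T"
begin

definition "P = PiM {..<2*T} (\<lambda>_. SL)"
definition "W k s = sgd_iter D R lam T s k"
definition "mu s = phase1_mean T s"

lemma PS: "product_prob_space (\<lambda>_::nat. SL)"
  unfolding product_prob_space_def product_prob_space_axioms_def product_sigma_finite_def
  using probSL by (auto simp: prob_space_imp_sigma_finite)

lemma probP: "prob_space (PiM I (\<lambda>_::nat. SL))"
  by (rule prob_space_PiM) (rule probSL)

lemma comp_meas: "i \<in> I \<Longrightarrow> (\<lambda>s. fst (s i)) \<in> borel_measurable (PiM I (\<lambda>_. SL))"
                 "i \<in> I \<Longrightarrow> (\<lambda>s. snd (s i)) \<in> borel_measurable (PiM I (\<lambda>_. SL))"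
  by measurable

lemma mu_meas[measurable]: "{..<T} \<subseteq> I \<Longrightarrow> mu \<in> borel_measurable (PiM I (\<lambda>_. SL))"
  unfolding mu_def phase1_mean_def
  by (intro borel_measurable_scaleR borel_measurable_const borel_measurable_sum comp_meas) auto

lemma W_meas: "{..<T+k} \<subseteq> I \<Longrightarrow> W k \<in> borel_measurable (PiM I (\<lambda>_. SL))"
proof (induction k)
  case 0 then show ?case by (simp add: W_def)
next
  case (Suc k)
  have "{..<T+k} \<subseteq> I" using Suc.prems by auto
  then have [measurable]: "W k \<in> borel_measurable (PiM I (\<lambda>_. SL))" using Suc.IH by auto
  have [measurable]: "mu \<in> borel_measurable (PiM I (\<lambda>_. SL))" using Suc by (intro mu_meas) auto
  have [measurable]: "(\<lambda>s. fst (s (T + k))) \<in> borel_measurable (PiM I (\<lambda>_. SL))"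
     "(\<lambda>s. snd (s (T + k))) \<in> borel_measurable (PiM I (\<lambda>_. SL))" using Suc by (auto intro!: comp_meas)
  have eq: "W (Suc k) = (\<lambda>s. projW D (W k s - (1 / (lam * real (Suc k))) *\<^sub>R
      (phi R (inner (W k s) (fst (s (T + k)) - mu s) - snd (s (T + k))) *\<^sub>R (fst (s (T + k)) - mu s))))"
    by (auto simp: W_def mu_def Let_def)
  show ?case unfolding eq phi_def by measurable
qed

lemma AE_mu: "{..<T} \<subseteq> I \<Longrightarrow> AE s in PiM I (\<lambda>_. SL). norm (mu s) \<le> 1"
proof -
  assume I: "{..<T} \<subseteq> I"
  have "AE s in PiM I (\<lambda>_. SL). \<forall>i\<in>{..<T}. norm (fst (s i)) \<le> 1"
  proof (rule AE_finite_allI)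
    fix i assume "i \<in> {..<T}"
    then show "AE s in PiM I (\<lambda>_. SL). norm (fst (s i)) \<le> 1"
      using I by (intro AE_PiM_component[where P="\<lambda>y. norm (fst y) \<le> 1"] AE_SL_x probSL) auto
  qed simp
  then show ?thesis
  proof eventually_elim
    case (elim s)
    have "norm (mu s) \<le> (1 / real T) * (\<Sum>i<T. norm (fst (s i)))"
      unfolding mu_def phase1_mean_def using norm_sum[of "\<lambda>i. fst (s i)" "{..<T}"]
      by (simp add: divide_right_mono)
    also have "\<dots> \<le> (1 / real T) * (\<Sum>i<T. 1)"
      using elim by (intro mult_left_mono sum_mono) auto
    also have "\<dots> = 1" using T_pos by simp
    finally show ?case .
  qed
qed


definition "Bd k s = (let eta = 1 / (lam * real (Suc k)) in
   (norm (W k s - wstar))^2 - 2 * eta * (lam * (norm (W k s - wstar))^2 - R * norm (W k s - wstar) * norm (m - mu s)) + eta^2 * (4 * R^2))"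

lemma lam_pos: "lam > 0" using alpha rho_pos by simp

lemma step_P:
  assumes k: "k < T"
  shows "(\<integral>\<^sup>+ s. ennreal ((norm (W (Suc k) s - wstar))^2) \<partial>P) \<le> (\<integral>\<^sup>+ s. ennreal (Bd k s) \<partial>P)"
proof -
  interpret PSi: product_prob_space "\<lambda>_::nat. SL" by (rule PS)
  define i where "i = T + k"
  define I' where "I' = {..<2*T} - {i}"
  have ins: "insert i I' = {..<2*T}" using k unfolding I'_def i_def by auto
  have fin: "finite I'" "i \<notin> I'" unfolding I'_def by auto
  have sub: "{..<T} \<subseteq> I'" unfolding I'_def i_def by auto
  define eta where "eta = 1 / (lam * real (Suc k))"
  have eta0: "eta \<ge> 0" unfolding eta_def using lam_pos by simp
  have [measurable]: "W k \<in> borel_measurable P" "W (Suc k) \<in> borel_measurable P" "mu \<in> borel_measurable P"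
    unfolding P_def using k by (auto intro!: W_meas mu_meas)
  have Wloc: "W k (x(i := y)) = W k x" for x y unfolding W_def i_def by (rule sgd_local) auto
  have muloc: "mu (x(i := y)) = mu x" for x y unfolding mu_def i_def by (rule phase1_local) auto
  have Wstep: "W (Suc k) (x(i := y)) = projW D (W k x - eta *\<^sub>R (phi R (inner (W k x) (fst y - mu x) - snd y) *\<^sub>R (fst y - mu x)))" for x y
  proof -
    have "W (Suc k) (x(i := y)) = projW D (W k (x(i := y)) - eta *\<^sub>R (phi R (inner (W k (x(i := y))) (fst y - mu (x(i := y))) - snd y) *\<^sub>R (fst y - mu (x(i := y)))))"
      by (simp add: W_def mu_def Let_def eta_def i_def)
    then show ?thesis unfolding Wloc muloc .
  qed
  have "(\<integral>\<^sup>+ s. ennreal ((norm (W (Suc k) s - wstar))^2) \<partial>P) =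
      (\<integral>\<^sup>+ x. (\<integral>\<^sup>+ y. ennreal ((norm (W (Suc k) (x(i := y)) - wstar))^2) \<partial>SL) \<partial>PiM I' (\<lambda>_. SL))"
    unfolding P_def ins[symmetric] by (rule PSi.product_nn_integral_insert[OF fin]) (unfold ins, fold P_def, measurable)
  also have "\<dots> \<le> (\<integral>\<^sup>+ x. ennreal (Bd k x) \<partial>PiM I' (\<lambda>_. SL))"
  proof (rule nn_integral_mono_AE)
    show "AE x in PiM I' (\<lambda>_. SL). (\<integral>\<^sup>+ y. ennreal ((norm (W (Suc k) (x(i := y)) - wstar))^2) \<partial>SL) \<le> ennreal (Bd k x)"
      using AE_mu[OF sub]
    proof eventually_elim
      case (elim x)
      have wn: "norm (W k x) \<le> D" unfolding W_def using D_pos by (intro sgd_norm) auto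
      show ?case unfolding Wstep Bd_def Let_def eta_def[symmetric]
        by (rule step_SL[OF wn elim eta0])
    qed
  qed
  also have "\<dots> = (\<integral>\<^sup>+ s. ennreal (Bd k s) \<partial>P)"
  proof -
    have [measurable]: "(\<lambda>s. ennreal (Bd k s)) \<in> borel_measurable P"
      unfolding Bd_def Let_def by measurable
    have "(\<integral>\<^sup>+ s. ennreal (Bd k s) \<partial>P) = (\<integral>\<^sup>+ x. (\<integral>\<^sup>+ y. ennreal (Bd k (x(i := y))) \<partial>SL) \<partial>PiM I' (\<lambda>_. SL))"
      unfolding P_def ins[symmetric] by (rule PSi.product_nn_integral_insert[OF fin]) (unfold ins, fold P_def, measurable)
    also have "\<dots> = (\<integral>\<^sup>+ x. ennreal (Bd k x) \<partial>PiM I' (\<lambda>_. SL))"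
      using prob_space.emeasure_space_1[OF probSL]
      by (simp add: Bd_def Wloc muloc)
    finally show ?thesis by simp
  qed
  finally show ?thesis .
qed


end


context tctx2 begin

lemma SL_lin: "integrable SL (\<lambda>y. inner b (fst y - m))" "(\<integral>y. inner b (fst y - m) \<partial>SL) = 0"
proof -
  interpret SLp: prob_space SL by (rule probSL)
  have mb: "norm m \<le> 1" by (rule m_norm)
  have bd: "norm (fst y) \<le> 1 \<Longrightarrow> norm (inner b (fst y - m)) \<le> 2 * norm b" for y
    using inner_bd[OF _ mb, of "fst y" b "norm b"] by simp
  show "integrable SL (\<lambda>y. inner b (fst y - m))"
    by (rule SLp.integrable_const_bound[of _ "2 * norm b"]) (use AE_SL_x bd in \<open>auto elim: AE_mp\<close>)
  have c: "(\<lambda>y::'a \<times> real. inner b (fst y - m)) \<in> borel_measurable borel"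
    by (intro borel_measurable_continuous_onI continuous_intros)
  have "(\<integral>y. inner b (fst y - m) \<partial>SL) = (\<integral>z. inner b (fst (smp z) - m) \<partial>N)"
    unfolding SL_eq by (rule integral_distr[OF smp_meas c])
  also have "\<dots> = (\<integral>z. (\<lambda>x. inner b (x - m)) (fst z) * (\<lambda>_. 1) (snd z) \<partial>N)"
    by (rule Bochner_Integration.integral_cong) (auto simp: smp_def split: prod.splits)
  also have "\<dots> = (\<integral>x. inner b (x - m) \<partial>Mx) * (\<integral>y. 1 \<partial>Q)"
  proof (rule int_prod_N)
    show "integrable N (\<lambda>z. inner b (fst z - m) * 1)"
      by (rule intN[of _ "2 * norm b"]) (use bd in \<open>auto simp: N_def\<close>)
  qed
  also have "\<dots> = 0" using int_lin[of b m] by simp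
  finally show "(\<integral>y. inner b (fst y - m) \<partial>SL) = 0" .
qed

definition "u i s = fst (s i) - m"

lemma AE_u: "i < 2 * T \<Longrightarrow> AE s in P. norm (u i s) \<le> 2"
proof -
  assume i: "i < 2 * T"
  have "AE s in P. norm (fst (s i)) \<le> 1"
    unfolding P_def using i by (intro AE_PiM_component[where P="\<lambda>y. norm (fst y) \<le> 1"] AE_SL_x probSL) auto
  then show ?thesis
  proof eventually_elim
    case (elim s)
    then show ?case unfolding u_def using m_norm norm_triangle_ineq4[of "fst (s i)" m] by linarith
  qed
qed

lemma u_meas[measurable]: "i < 2 * T \<Longrightarrow> u i \<in> borel_measurable P"
  unfolding u_def P_def by measurable

lemma int_uu: "i < 2 * T \<Longrightarrow> j < 2 * T \<Longrightarrow> integrable P (\<lambda>s. inner (u i s) (u j s))"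
proof -
  assume ij: "i < 2 * T" "j < 2 * T"
  interpret Pp: prob_space P unfolding P_def by (rule probP)
  show ?thesis
  proof (rule Pp.integrable_const_bound[of _ 4])
    show "AE s in P. norm (inner (u i s) (u j s)) \<le> 4" using AE_u[OF ij(1)] AE_u[OF ij(2)]
    proof eventually_elim
      case (elim s)
      have "\<bar>inner (u i s) (u j s)\<bar> \<le> norm (u i s) * norm (u j s)" by (rule Cauchy_Schwarz_ineq2)
      also have "\<dots> \<le> 2 * 2" using elim by (intro mult_mono) auto
      finally show ?case by simp
    qed
    show "(\<lambda>s. inner (u i s) (u j s)) \<in> borel_measurable P" using ij by measurable
  qed
qed

lemma cross0:
  assumes ij: "i < 2 * T" "j < 2 * T" "i \<noteq> j"
  shows "(\<integral>s. inner (u i s) (u j s) \<partial>P) = 0"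
proof -
  interpret PSi: product_prob_space "\<lambda>_::nat. SL" by (rule PS)
  have "(\<integral>s. inner (u i s) (u j s) \<partial>P) = (\<integral>s. (\<Sum>b\<in>Basis. inner (u i s) b * inner (u j s) b) \<partial>P)"
    by (rule Bochner_Integration.integral_cong[OF refl], rule euclidean_inner)
  also have "\<dots> = (\<Sum>b\<in>Basis. (\<integral>s. inner (u i s) b * inner (u j s) b \<partial>P))"
  proof (rule Bochner_Integration.integral_sum)
    fix b :: 'a assume "b \<in> Basis"
    interpret Pp: prob_space P unfolding P_def by (rule probP)
    show "integrable P (\<lambda>s. inner (u i s) b * inner (u j s) b)"
    proof (rule Pp.integrable_const_bound[of _ "4 * (norm b * norm b)"])
      show "AE s in P. norm (inner (u i s) b * inner (u j s) b) \<le> 4 * (norm b * norm b)"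
        using AE_u[OF ij(1)] AE_u[OF ij(2)]
      proof eventually_elim
        case (elim s)
        have "\<bar>inner (u i s) b\<bar> \<le> 2 * norm b"
          using Cauchy_Schwarz_ineq2[of "u i s" b] elim mult_right_mono[of "norm (u i s)" 2 "norm b"] by simp
        moreover have "\<bar>inner (u j s) b\<bar> \<le> 2 * norm b"
          using Cauchy_Schwarz_ineq2[of "u j s" b] elim mult_right_mono[of "norm (u j s)" 2 "norm b"] by simp
        ultimately have "\<bar>inner (u i s) b\<bar> * \<bar>inner (u j s) b\<bar> \<le> (2 * norm b) * (2 * norm b)"
          by (intro mult_mono) auto
        then show ?case by (simp add: abs_mult)
      qed
      show "(\<lambda>s. inner (u i s) b * inner (u j s) b) \<in> borel_measurable P" using ij by measurable
    qed
  qed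
  also have "\<dots> = 0"
  proof (rule sum.neutral, rule ballI)
    fix b :: 'a assume "b \<in> Basis"
    define f where "f = (\<lambda>l::nat. if l = i \<or> l = j then (\<lambda>y::'a \<times> real. inner b (fst y - m)) else (\<lambda>_. 1))"
    have prodeq: "(\<Prod>l\<in>{..<2*T}. f l (s l)) = inner (u i s) b * inner (u j s) b" for s
    proof -
      have "(\<Prod>l\<in>{..<2*T}. f l (s l)) = (\<Prod>l\<in>{i, j}. f l (s l))"
        using ij by (intro prod.mono_neutral_right) (auto simp: f_def)
      also have "\<dots> = inner (u i s) b * inner (u j s) b"
        using ij by (simp add: f_def u_def inner_commute)
      finally show ?thesis .
    qed
    have "(\<integral>s. inner (u i s) b * inner (u j s) b \<partial>P) = (\<integral>s. (\<Prod>l\<in>{..<2*T}. f l (s l)) \<partial>P)"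
      unfolding prodeq ..
    also have "\<dots> = (\<Prod>l\<in>{..<2*T}. integral\<^sup>L SL (f l))"
      unfolding P_def
    proof (rule PSi.product_integral_prod)
      fix l assume "l \<in> {..<2*T}"
      interpret SLp: prob_space SL by (rule probSL)
      show "integrable SL (f l)" unfolding f_def using SL_lin(1)[of b] by auto
    qed simp
    also have "\<dots> = 0"
      using ij SL_lin(2)[of b] by (intro prod_zero bexI[of _ i]) (auto simp: f_def)
    finally show "(\<integral>s. inner (u i s) b * inner (u j s) b \<partial>P) = 0" .
  qed
  finally show ?thesis .
qed


lemma diag4: "i < 2 * T \<Longrightarrow> (\<integral>s. inner (u i s) (u i s) \<partial>P) \<le> 4"
proof -
  assume i: "i < 2 * T"
  interpret Pp: prob_space P unfolding P_def by (rule probP)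
  show ?thesis
  proof (rule Pp.integral_le_const[OF int_uu[OF i i]])
    show "AE s in P. inner (u i s) (u i s) \<le> 4" using AE_u[OF i]
    proof eventually_elim
      case (elim s)
      have "inner (u i s) (u i s) = (norm (u i s))^2" by (simp add: power2_norm_eq_inner)
      also have "\<dots> \<le> 2^2" using elim by (intro power_mono) auto
      finally show ?case by simp
    qed
  qed
qed

lemma mu_expand: "(norm (m - mu s))^2 = (1 / real T)^2 * (\<Sum>i<T. \<Sum>j<T. inner (u i s) (u j s))"
proof -
  have "(\<Sum>i<T. u i s) = (\<Sum>i<T. fst (s i)) - real T *\<^sub>R m"
    unfolding u_def by (simp add: sum_subtractf sum_constant_scaleR)
  then have "(1 / real T) *\<^sub>R (\<Sum>i<T. u i s) = mu s - m"
    using T_pos by (simp add: mu_def phase1_mean_def scaleR_diff_right)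
  then have "(norm (m - mu s))^2 = (norm ((1 / real T) *\<^sub>R (\<Sum>i<T. u i s)))^2"
    by (simp add: norm_minus_commute)
  also have "\<dots> = (1 / real T)^2 * inner (\<Sum>i<T. u i s) (\<Sum>i<T. u i s)"
    by (simp only: norm_scaleR power_mult_distrib power2_norm_eq_inner) simp
  also have "inner (\<Sum>i<T. u i s) (\<Sum>i<T. u i s) = (\<Sum>i<T. \<Sum>j<T. inner (u i s) (u j s))"
    by (simp add: inner_sum_left inner_sum_right) (rule sum.swap)
  finally show ?thesis .
qed

lemma var_mu: "(\<integral>\<^sup>+ s. ennreal ((norm (m - mu s))^2) \<partial>P) \<le> ennreal (4 / real T)"
proof -
  have iF: "integrable P (\<lambda>s. (1 / real T)^2 * (\<Sum>i<T. \<Sum>j<T. inner (u i s) (u j s)))"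
    by (intro integrable_mult_right Bochner_Integration.integrable_sum int_uu) auto
  have "(\<integral>s. (1 / real T)^2 * (\<Sum>i<T. \<Sum>j<T. inner (u i s) (u j s)) \<partial>P)
      = (1 / real T)^2 * (\<Sum>i<T. \<Sum>j<T. (\<integral>s. inner (u i s) (u j s) \<partial>P))"
  proof -
    have "(\<integral>s. (\<Sum>i<T. \<Sum>j<T. inner (u i s) (u j s)) \<partial>P) = (\<Sum>i<T. (\<integral>s. (\<Sum>j<T. inner (u i s) (u j s)) \<partial>P))"
      by (rule Bochner_Integration.integral_sum) (intro Bochner_Integration.integrable_sum int_uu, auto)
    also have "\<dots> = (\<Sum>i<T. \<Sum>j<T. (\<integral>s. inner (u i s) (u j s) \<partial>P))"
      by (intro sum.cong refl Bochner_Integration.integral_sum int_uu) auto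
    finally show ?thesis by simp
  qed
  also have "(\<Sum>i<T. \<Sum>j<T. (\<integral>s. inner (u i s) (u j s) \<partial>P)) = (\<Sum>i<T. (\<integral>s. inner (u i s) (u i s) \<partial>P))"
  proof (rule sum.cong[OF refl])
    fix i assume i: "i \<in> {..<T}"
    have "(\<Sum>j<T. (\<integral>s. inner (u i s) (u j s) \<partial>P)) = (\<Sum>j<T. if j = i then (\<integral>s. inner (u i s) (u i s) \<partial>P) else 0)"
      using i by (intro sum.cong[OF refl]) (auto intro!: cross0)
    also have "\<dots> = (\<integral>s. inner (u i s) (u i s) \<partial>P)" using i by simp
    finally show "(\<Sum>j<T. (\<integral>s. inner (u i s) (u j s) \<partial>P)) = (\<integral>s. inner (u i s) (u i s) \<partial>P)" .
  qed
  also have "(\<Sum>i<T. (\<integral>s. inner (u i s) (u i s) \<partial>P)) \<le> (\<Sum>i<T. 4)"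
    by (intro sum_mono diag4) auto
  finally have le: "(\<integral>s. (1 / real T)^2 * (\<Sum>i<T. \<Sum>j<T. inner (u i s) (u j s)) \<partial>P) \<le> (1 / real T)^2 * (real T * 4)"
    by (simp add: mult_left_mono)
  have "(\<integral>\<^sup>+ s. ennreal ((norm (m - mu s))^2) \<partial>P) = ennreal (\<integral>s. (1 / real T)^2 * (\<Sum>i<T. \<Sum>j<T. inner (u i s) (u j s)) \<partial>P)"
    unfolding mu_expand[symmetric] by (rule nn_integral_eq_integral) (use iF in \<open>auto simp: mu_expand[symmetric]\<close>)
  also have "\<dots> \<le> ennreal ((1 / real T)^2 * (real T * 4))" by (rule ennreal_leI[OF le])
  also have "(1 / real T)^2 * (real T * 4) = 4 / real T" using T_pos by (simp add: power2_eq_square)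
  finally show ?thesis .
qed

end



lemma harm_le_ln: "n \<ge> 1 \<Longrightarrow> harm n \<le> ln (real n) + (1::real)"
proof (induction n rule: nat_induct_at_least)
  case base then show ?case by (simp add: harm_def)
next
  case (Suc n)
  have n: "real n > 0" using Suc by simp
  have "ln (real n / real (Suc n)) \<le> real n / real (Suc n) - 1"
    using n by (intro ln_le_minus_one) auto
  also have "\<dots> = - inverse (real (Suc n))" by (simp add: field_simps)
  finally have "ln (real n) - ln (real (Suc n)) \<le> - inverse (real (Suc n))"
    using n by (simp add: ln_div)
  then have "ln (real n) + inverse (real (Suc n)) \<le> ln (real (Suc n))" by linarith
  moreover have "(harm (Suc n)::real) = harm n + inverse (real (Suc n))" by (simp add: harm_Suc)
  ultimately show ?case using Suc by linarith
qed

context tctx2 begin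

definition "C = R^2 / lam^2"
definition "a k = (\<integral>\<^sup>+ s. ennreal ((norm (W k s - wstar))^2) \<partial>P)"

lemma Bd_le:
  "Bd k s \<le> (1 - 1 / real (Suc k)) * (norm (W k s - wstar))^2 + (C / real (Suc k)) * (norm (m - mu s))^2
      + 4 * C / (real (Suc k))^2"
proof -
  define L where "L = lam"
  define t where "t = real (Suc k)"
  define x where "x = norm (W k s - wstar)"
  define d where "d = norm (m - mu s)"
  define b where "b = R * d / L"
  have t: "t > 0" unfolding t_def by simp
  have l: "L > 0" unfolding L_def by (rule lam_pos)
  have key: "2 * x * b \<le> x^2 + b^2" using sum_squares_ge_zero[of "x - b" 0] by (simp add: power2_eq_square algebra_simps)
  define eta where "eta = 1 / (L * t)"
  have e0: "Bd k s = x^2 - 2 * eta * (L * x^2 - R * x * d) + eta^2 * (4 * R^2)"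
    unfolding Bd_def Let_def x_def[symmetric] d_def[symmetric] t_def[symmetric] eta_def L_def ..
  have f1: "2 * eta * (L * x^2) = 2 * x^2 / t" unfolding eta_def using t l by (simp add: field_simps)
  have f2: "2 * eta * (R * x * d) = (2 / t) * (x * b)" unfolding eta_def b_def using t l by (simp add: field_simps)
  have f3: "eta^2 * (4 * R^2) = 4 * C / t^2" unfolding eta_def C_def L_def[symmetric] using t l by (simp add: field_simps power2_eq_square)
  have e1: "Bd k s = x^2 - 2 * x^2 / t + (2 / t) * (x * b) + 4 * C / t^2"
    unfolding e0 using f1 f2 f3 by (simp add: right_diff_distrib)
  have e2: "b^2 = C * d^2" unfolding b_def C_def L_def[symmetric] using l by (simp add: field_simps power2_eq_square)
  have "(2 / t) * (x * b) \<le> (x^2 + b^2) / t" using key t by (simp add: field_simps)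
  have g1: "(x^2 + b^2)/t = x^2/t + b^2/t" by (simp add: add_divide_distrib)
  have g2: "(1 - 1/t)*x^2 = x^2 - x^2/t" by (simp add: algebra_simps)
  have g3: "(C/t)*d^2 = b^2/t" using e2 by simp
  have g4: "2*x^2/t = 2*(x^2/t)" by simp
  have "Bd k s \<le> (1 - 1 / t) * x^2 + (C / t) * d^2 + 4 * C / t^2"
    unfolding e1 g2 g3 using g1 g4 \<open>(2 / t) * (x * b) \<le> (x^2 + b^2) / t\<close> by linarith
  then show ?thesis unfolding t_def x_def d_def .
qed

lemma ennreal_lin3:
  assumes "0 \<le> A" "0 \<le> X" "0 \<le> B" "0 \<le> Y" "0 \<le> Z"
  shows "ennreal (A * X + B * Y + Z) = ennreal A * ennreal X + ennreal B * ennreal Y + ennreal Z"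
  using assms by (simp add: ennreal_plus ennreal_mult)

lemma ennreal_lin2:
  assumes "0 \<le> A" "0 \<le> X" "0 \<le> Z"
  shows "ennreal (A * X + Z) = ennreal A * ennreal X + ennreal Z"
  using assms by (simp add: ennreal_plus ennreal_mult)

lemma alg_id:
  fixes x y z c h :: real
  assumes "x > 0" "y > 0" "z = x + 1"
  shows "(1 - 1 / z) * (4 * c / y + 4 * c * h / x) + (c / z) * (4 / y) + 4 * c / z^2
       = 4 * c / y + 4 * c * (h + inverse z) / z"
proof -
  have z: "z > 0" "z \<noteq> 0" using assms by auto
  have x: "x \<noteq> 0" "y \<noteq> 0" using assms by auto
  have e: "1 - 1 / z = x / z" using z assms by (simp add: field_simps)
  have "(x / z) * (4 * c * h / x) = 4 * c * h / z" using x by simp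
  moreover have "(x / z) * (4 * c / y) + (c / z) * (4 / y) = 4 * c * (x + 1) / (z * y)"
    by (simp add: field_simps add_divide_distrib)
  moreover have "4 * c * (x + 1) / (z * y) = 4 * c / y" using assms z x by simp
  moreover have "4 * c / z^2 + 4 * c * h / z = 4 * c * (h + inverse z) / z"
    using z by (simp add: field_simps power2_eq_square)
  ultimately show ?thesis unfolding e by (simp add: algebra_simps)
qed

lemma C_nonneg: "C \<ge> 0" unfolding C_def by simp

lemma rec:
  assumes k: "k < T"
  shows "a (Suc k) \<le> ennreal (1 - 1 / real (Suc k)) * a k + ennreal (C / real (Suc k)) * ennreal (4 / real T)
     + ennreal (4 * C / (real (Suc k))^2)"
proof -
  interpret Pp: prob_space P unfolding P_def by (rule probP)
  have [measurable]: "W k \<in> borel_measurable P" "mu \<in> borel_measurable P"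
    unfolding P_def using k by (auto intro!: W_meas mu_meas)
  have c1: "1 - 1 / real (Suc k) \<ge> 0" by (simp add: field_simps)
  have "a (Suc k) \<le> (\<integral>\<^sup>+ s. ennreal (Bd k s) \<partial>P)" unfolding a_def by (rule step_P[OF k])
  also have "\<dots> \<le> (\<integral>\<^sup>+ s. ennreal (1 - 1 / real (Suc k)) * ennreal ((norm (W k s - wstar))^2)
      + ennreal (C / real (Suc k)) * ennreal ((norm (m - mu s))^2) + ennreal (4 * C / (real (Suc k))^2) \<partial>P)"
  proof (rule nn_integral_mono)
    fix s
    have "ennreal (Bd k s) \<le> ennreal ((1 - 1 / real (Suc k)) * (norm (W k s - wstar))^2 + (C / real (Suc k)) * (norm (m - mu s))^2
      + 4 * C / (real (Suc k))^2)" by (rule ennreal_leI[OF Bd_le])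
    also have "\<dots> = ennreal (1 - 1 / real (Suc k)) * ennreal ((norm (W k s - wstar))^2)
      + ennreal (C / real (Suc k)) * ennreal ((norm (m - mu s))^2) + ennreal (4 * C / (real (Suc k))^2)"
      using c1 C_nonneg by (intro ennreal_lin3) auto
    finally show "ennreal (Bd k s) \<le> \<dots>" .
  qed
  also have "\<dots> = ennreal (1 - 1 / real (Suc k)) * a k + ennreal (C / real (Suc k)) * (\<integral>\<^sup>+ s. ennreal ((norm (m - mu s))^2) \<partial>P)
      + ennreal (4 * C / (real (Suc k))^2)"
    unfolding a_def
    by (subst nn_integral_add, measurable, subst nn_integral_add, measurable)
       (simp add: nn_integral_cmult Pp.emeasure_space_1)
  also have "\<dots> \<le> ennreal (1 - 1 / real (Suc k)) * a k + ennreal (C / real (Suc k)) * ennreal (4 / real T)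
      + ennreal (4 * C / (real (Suc k))^2)"
    by (intro add_mono mult_left_mono var_mu order_refl) auto
  finally show ?thesis .
qed

definition "B k = 4 * C / real T + 4 * C * harm k / real k"

lemma a_bound: "1 \<le> k \<Longrightarrow> k \<le> T \<Longrightarrow> a k \<le> ennreal (B k)"
proof (induction k rule: nat_induct_at_least)
  case base
  have "a 1 \<le> ennreal (1 - 1 / real (Suc 0)) * a 0 + ennreal (C / real (Suc 0)) * ennreal (4 / real T)
     + ennreal (4 * C / (real (Suc 0))^2)" using rec[of 0] T_pos by simp
  also have "\<dots> = ennreal (C / real (Suc 0)) * ennreal (4 / real T) + ennreal (4 * C / (real (Suc 0))^2)"
    by simp
  also have "\<dots> = ennreal ((C / real (Suc 0)) * (4 / real T) + 4 * C / (real (Suc 0))^2)"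
    using C_nonneg by (intro ennreal_lin2[symmetric]) auto
  also have "(C / real (Suc 0)) * (4 / real T) + 4 * C / (real (Suc 0))^2 = B 1"
    by (simp add: B_def harm_def)
  finally show ?case .
next
  case (Suc k)
  have k: "k < T" "1 \<le> k" using Suc by auto
  have Bk: "B k \<ge> 0" unfolding B_def using C_nonneg harm_nonneg[of k]
    by (intro add_nonneg_nonneg divide_nonneg_nonneg mult_nonneg_nonneg) auto
  have c1: "1 - 1 / real (Suc k) \<ge> 0" by (simp add: field_simps)
  have "a (Suc k) \<le> ennreal (1 - 1 / real (Suc k)) * a k + ennreal (C / real (Suc k)) * ennreal (4 / real T)
     + ennreal (4 * C / (real (Suc k))^2)" by (rule rec[OF k(1)])
  also have "\<dots> \<le> ennreal (1 - 1 / real (Suc k)) * ennreal (B k) + ennreal (C / real (Suc k)) * ennreal (4 / real T)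
     + ennreal (4 * C / (real (Suc k))^2)"
    using Suc k by (intro add_mono mult_left_mono order_refl) auto
  also have "\<dots> = ennreal ((1 - 1 / real (Suc k)) * B k + (C / real (Suc k)) * (4 / real T) + 4 * C / (real (Suc k))^2)"
    using c1 Bk C_nonneg by (intro ennreal_lin3[symmetric]) auto
  also have "(1 - 1 / real (Suc k)) * B k + (C / real (Suc k)) * (4 / real T) + 4 * C / (real (Suc k))^2 = B (Suc k)"
  proof -
    have kk: "real k > 0" "real T > 0" using k T_pos by auto
    have "(harm (Suc k)::real) = harm k + inverse (real (Suc k))" by (rule harm_Suc)
    then show ?thesis unfolding B_def using alg_id[OF kk, of "real (Suc k)" C "harm k"] by simp
  qed
  finally show ?case .
qed


lemma T2: "2 * (T div 2) = T" using T_even by simp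

lemma B_le:
  assumes j: "T div 2 \<le> j" "1 \<le> j" "j \<le> T"
  shows "B j \<le> C * (12 + 8 * ln (real T)) / real T"
proof -
  have Tp: "real T > 0" using T_pos by simp
  have jT: "real T \<le> 2 * real j" using j T2 by linarith
  have hj: "harm j \<le> ln (real T) + (1::real)"
  proof -
    have "(harm j::real) \<le> harm T" by (rule harm_mono[OF j(3)])
    then show ?thesis using harm_le_ln[of T] T_pos by linarith
  qed
  have lnT: "ln (real T) \<ge> 0" using T_pos by simp
  have h0: "(harm j::real) \<ge> 0" by (rule harm_nonneg)
  have "4 * C * harm j / real j \<le> 4 * C * (ln (real T) + 1) / real j"
    using hj C_nonneg j by (intro divide_right_mono mult_left_mono) auto
  also have "\<dots> \<le> 4 * C * (ln (real T) + 1) / (real T / 2)"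
    using jT j Tp C_nonneg lnT by (intro divide_left_mono mult_nonneg_nonneg) auto
  also have "\<dots> = 8 * C * (ln (real T) + 1) / real T" by simp
  finally have "B j \<le> 4 * C / real T + 8 * C * (ln (real T) + 1) / real T" unfolding B_def by simp
  also have "\<dots> = C * (12 + 8 * ln (real T)) / real T" using Tp by (simp add: field_simps)
  finally show ?thesis .
qed

lemma wbar_pt:
  "(norm (wbar D R lam T s - wstar))^2 \<le> (2 / real T) * (\<Sum>t\<in>{T div 2 + 1..T}. (norm (W (t - 1) s - wstar))^2)"
proof -
  define S where "S = {T div 2 + 1..T}"
  have cS: "real (card S) = real T / 2" unfolding S_def using T2 by (simp add: of_nat_diff)
  have Tp: "real T > 0" using T_pos by simp
  have fS: "finite S" unfolding S_def by simp
  have "wbar D R lam T s - wstar = (2 / real T) *\<^sub>R (\<Sum>t\<in>S. W (t - 1) s - wstar)"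
  proof -
    have "(2 / real T) *\<^sub>R (\<Sum>t\<in>S. W (t - 1) s - wstar) = (2 / real T) *\<^sub>R (\<Sum>t\<in>S. W (t - 1) s) - ((2 / real T) * real (card S)) *\<^sub>R wstar"
      by (simp add: sum_subtractf scaleR_diff_right sum_constant_scaleR)
    also have "(2 / real T) * real (card S) = 1" using cS Tp by simp
    finally show ?thesis unfolding wbar_def W_def S_def by simp
  qed
  then have "(norm (wbar D R lam T s - wstar))^2 = (2 / real T)^2 * (norm (\<Sum>t\<in>S. W (t - 1) s - wstar))^2"
    by (simp only: norm_scaleR power_mult_distrib power2_abs)
  also have "\<dots> \<le> (2 / real T)^2 * ((\<Sum>t\<in>S. norm (W (t - 1) s - wstar))^2)"
    by (intro mult_left_mono power_mono norm_sum) auto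
  also have "\<dots> \<le> (2 / real T)^2 * ((\<Sum>t\<in>S. (norm (W (t - 1) s - wstar))^2) * real (card S))"
    by (intro mult_left_mono sum_squared_le_sum_of_squares) auto
  also have "\<dots> = (2 / real T) * (\<Sum>t\<in>S. (norm (W (t - 1) s - wstar))^2)"
    unfolding cS using Tp by (simp add: power2_eq_square)
  finally show ?thesis unfolding S_def .
qed

lemma final:
  "(\<integral>\<^sup>+ s. ennreal ((norm (wbar D R lam T s - wstar))^2) \<partial>P) \<le> ennreal (72 * R^2 * (2 * ln (real T) + 1) / (lam^2 * real T))"
proof -
  define S where "S = {T div 2 + 1..T}"
  define Bf where "Bf = C * (12 + 8 * ln (real T)) / real T"
  have cS: "real (card S) = real T / 2" unfolding S_def using T2 by (simp add: of_nat_diff)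
  have Tp: "real T > 0" using T_pos by simp
  have lnT: "ln (real T) \<ge> 0" using T_pos by simp
  have Bf0: "Bf \<ge> 0" unfolding Bf_def using C_nonneg lnT by simp
  have meas: "t \<in> S \<Longrightarrow> (\<lambda>s. ennreal ((norm (W (t - 1) s - wstar))^2)) \<in> borel_measurable P" for t
  proof -
    assume "t \<in> S"
    then have "W (t - 1) \<in> borel_measurable P" unfolding P_def S_def by (intro W_meas) auto
    then show ?thesis by measurable
  qed
  have "(\<integral>\<^sup>+ s. ennreal ((norm (wbar D R lam T s - wstar))^2) \<partial>P)
      \<le> (\<integral>\<^sup>+ s. ennreal (2 / real T) * (\<Sum>t\<in>S. ennreal ((norm (W (t - 1) s - wstar))^2)) \<partial>P)"
  proof (rule nn_integral_mono)
    fix s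
    have "ennreal ((norm (wbar D R lam T s - wstar))^2) \<le> ennreal ((2 / real T) * (\<Sum>t\<in>S. (norm (W (t - 1) s - wstar))^2))"
      unfolding S_def by (rule ennreal_leI[OF wbar_pt])
    also have "\<dots> = ennreal (2 / real T) * ennreal (\<Sum>t\<in>S. (norm (W (t - 1) s - wstar))^2)"
      by (rule ennreal_mult) (auto intro!: sum_nonneg)
    also have "ennreal (\<Sum>t\<in>S. (norm (W (t - 1) s - wstar))^2) = (\<Sum>t\<in>S. ennreal ((norm (W (t - 1) s - wstar))^2))"
      by (rule sum_ennreal[symmetric]) simp
    finally show "ennreal ((norm (wbar D R lam T s - wstar))^2) \<le> ennreal (2 / real T) * (\<Sum>t\<in>S. ennreal ((norm (W (t - 1) s - wstar))^2))" .
  qed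
  also have "\<dots> = ennreal (2 / real T) * (\<Sum>t\<in>S. a (t - 1))"
  proof -
    have m2: "(\<lambda>s. \<Sum>t\<in>S. ennreal ((norm (W (t - 1) s - wstar))^2)) \<in> borel_measurable P"
      using meas by (intro borel_measurable_sum) auto
    show ?thesis unfolding a_def
      by (subst nn_integral_cmult[OF m2], subst nn_integral_sum) (use meas in auto)
  qed
  also have "\<dots> \<le> ennreal (2 / real T) * (\<Sum>t\<in>S. ennreal Bf)"
  proof (intro mult_left_mono sum_mono)
    fix t assume t: "t \<in> S"
    then have j: "T div 2 \<le> t - 1" "1 \<le> t - 1" "t - 1 \<le> T" unfolding S_def using T2 T_pos by auto
    show "a (t - 1) \<le> ennreal Bf" using a_bound[OF j(2,3)] B_le[OF j] unfolding Bf_def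
      by (meson ennreal_leI order_trans)
  qed simp
  also have "\<dots> = ennreal ((2 / real T) * (real (card S) * Bf))"
  proof -
    have "(\<Sum>t\<in>S. ennreal Bf) = ennreal (\<Sum>t\<in>S. Bf)" using Bf0 by (rule sum_ennreal)
    also have "(\<Sum>t\<in>S. Bf) = real (card S) * Bf" by simp
    finally have "(\<Sum>t\<in>S. ennreal Bf) = ennreal (real (card S) * Bf)" .
    moreover have "ennreal (2 / real T) * ennreal (real (card S) * Bf) = ennreal ((2 / real T) * (real (card S) * Bf))"
      using Bf0 Tp by (intro ennreal_mult[symmetric]) auto
    ultimately show ?thesis by simp
  qed
  also have "(2 / real T) * (real (card S) * Bf) = Bf" unfolding cS using Tp by simp
  also have "Bf \<le> 72 * R^2 * (2 * ln (real T) + 1) / (lam^2 * real T)"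
  proof -
    have "Bf = (R^2 / lam^2) * (12 + 8 * ln (real T)) / real T" unfolding Bf_def C_def ..
    also have "\<dots> \<le> (R^2 / lam^2) * (72 * (2 * ln (real T) + 1)) / real T"
      using lnT Tp by (intro divide_right_mono mult_left_mono) auto
    also have "\<dots> = 72 * R^2 * (2 * ln (real T) + 1) / (lam^2 * real T)" by (simp add: field_simps)
    finally show ?thesis .
  qed
  finally show ?thesis by (simp add: ennreal_leI)
qed

end

theorem theorem3:
  fixes D \<sigma> \<alpha> \<rho> :: real
    and T :: nat
    and wstar :: "'a::euclidean_space"
    and Mx :: "'a measure" and Me Mb :: "real measure"
  assumes D_pos: "D > 0" and sigma_nonneg: "\<sigma> \<ge> 0"
    and alpha: "0 \<le> \<alpha>" "\<alpha> < 1" and rho_pos: "\<rho> > 0"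
    and T_pos: "T > 0" and T_even: "even T"
    and wstar: "norm wstar \<le> D"
    and Mx: "prob_space Mx" "sets Mx = sets borel"
    and Me: "prob_space Me" "sets Me = sets borel"
    and Mb: "prob_space Mb" "sets Mb = sets borel"
    and x_bdd: "AE x in Mx. norm x \<le> 1"
    and cov: "\<forall>v. cov_form Mx v v \<ge> \<rho> * (v \<bullet> v)"
    and eps_bdd: "AE e in Me. \<bar>e\<bar> \<le> \<sigma>"
    and eps_mean: "(\<integral>e. e \<partial>Me) = 0"
    and b_prob: "measure Mb {b. b \<noteq> 0} = \<alpha>"
  shows "(\<integral>\<^sup>+ s. ennreal ((norm (wbar D (6 * D + \<sigma>) ((1 - \<alpha>) * \<rho>) T s - wstar))\<^sup>2)
            \<partial>(PiM {..<2 * T} (\<lambda>_. sample_law wstar Mx Me Mb)))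
         \<le> ennreal (72 * (6 * D + \<sigma>)\<^sup>2 * (2 * ln (real T) + 1) / (((1 - \<alpha>) * \<rho>)\<^sup>2 * real T))"
proof -
  interpret tctx2 D \<sigma> \<alpha> \<rho> wstar Mx Me Mb T
    by (intro tctx2.intro tctx.intro tctx2_axioms.intro) (fact assms)+
  show ?thesis using final unfolding P_def SL_def .
qed

end
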